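(* Let $f_j(\Delta'_{n,k})$ denote the number of $j$-dimensional faces of the half-open hypersimplex $\Delta'_{n,k}$. Then for all integers $1\le j\le n$, $$ \sum_{k=1}^n f_j(\Delta'_{n,k})=j\cdot 2^{n-j-1}\,\frac{n+j+2}{n+1}\binom{n+1}{j+1}, $$ and for every integer $j\ge1$, with the convention $f_j(\Delta'_{n,k})=0$ when $j>n$, $$ \sum_{n\ge1}\sum_{k=1}^n f_j(\Delta'_{n,k})\,x^n=\frac{j\,x^j(1-x)}{(1-2x)^{j+2}}. $$
   Context: For integers $0<k\le n$, $\Delta_{n,k}=\{(x_1,\ldots,x_n)\in[0,1]^n : k-1\le x_1+\cdots+x_n\le k\}$ (a convex polytope) and the half-open hypersimplex is $\Delta'_{n,k}=\{(x_1,\ldots,x_n)\in[0,1]^n : k-1< x_1+\cdots+x_n\le k\}$. A $j$-face of $\Delta'_{n,k}$ is a set $F\cap\Delta'_{n,k}$ where $F$ is a $j$-dimensional face of $\Delta_{n,k}$ with $F\cap\Delta'_{n,k}\neq\emptyset$; $f_j(\Delta'_{n,k})$ is the number of such sets. *)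

theory Defs
  imports Complex_Main "HOL-Computational_Algebra.Formal_Power_Series"
begin

text \<open>Points of R^n are represented as functions nat \<Rightarrow> real that vanish
  outside the coordinates 0..n-1 (so R^n is a linear subspace of nat \<Rightarrow> real). Convexity, segments, faces and affine dimension
  are written out as in HOL-Analysis (convex, closed_segment, open_segment,
  face_of, aff_dim), since that library requires a euclidean_space type.\<close>

definition hypersimplex :: "nat \<Rightarrow> nat \<Rightarrow> (nat \<Rightarrow> real) set" where
  "hypersimplex n k = {x. (\<forall>i. n \<le> i \<longrightarrow> x i = 0) \<and> (\<forall>i<n. 0 \<le> x i \<and> x i \<le> 1)
      \<and> real k - 1 \<le> (\<Sum>i<n. x i) \<and> (\<Sum>i<n. x i) \<le> real k}"

definition half_open_hypersimplex :: "nat \<Rightarrow> nat \<Rightarrow> (nat \<Rightarrow> real) set" where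
  "half_open_hypersimplex n k = {x. (\<forall>i. n \<le> i \<longrightarrow> x i = 0) \<and> (\<forall>i<n. 0 \<le> x i \<and> x i \<le> 1)
      \<and> real k - 1 < (\<Sum>i<n. x i) \<and> (\<Sum>i<n. x i) \<le> real k}"

definition fconvex :: "(nat \<Rightarrow> real) set \<Rightarrow> bool" where
  "fconvex S \<longleftrightarrow> (\<forall>x\<in>S. \<forall>y\<in>S. \<forall>u::real. 0 \<le> u \<and> u \<le> 1 \<longrightarrow>
      (\<lambda>i. (1 - u) * x i + u * y i) \<in> S)"

definition fclosed_segment :: "(nat \<Rightarrow> real) \<Rightarrow> (nat \<Rightarrow> real) \<Rightarrow> (nat \<Rightarrow> real) set" where
  "fclosed_segment a b = {(\<lambda>i. (1 - u) * a i + u * b i) | u::real. 0 \<le> u \<and> u \<le> 1}"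

definition fopen_segment :: "(nat \<Rightarrow> real) \<Rightarrow> (nat \<Rightarrow> real) \<Rightarrow> (nat \<Rightarrow> real) set" where
  "fopen_segment a b = fclosed_segment a b - {a, b}"

definition fface_of :: "(nat \<Rightarrow> real) set \<Rightarrow> (nat \<Rightarrow> real) set \<Rightarrow> bool" where
  "fface_of T S \<longleftrightarrow> T \<subseteq> S \<and> fconvex T \<and>
     (\<forall>a\<in>S. \<forall>b\<in>S. \<forall>x\<in>T. x \<in> fopen_segment a b \<longrightarrow> a \<in> T \<and> b \<in> T)"

definition aff_indep_pts :: "nat \<Rightarrow> (nat \<Rightarrow> nat \<Rightarrow> real) \<Rightarrow> bool" where
  "aff_indep_pts m p \<longleftrightarrow> (\<forall>c::nat \<Rightarrow> real.
     (\<forall>i. (\<Sum>l\<le>m. c l * p l i) = 0) \<and> (\<Sum>l\<le>m. c l) = 0 \<longrightarrow> (\<forall>l\<le>m. c l = 0))"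

text \<open>A set has affine dimension j iff it contains j+1 but not j+2 affinely
  independent points (the empty set has dimension -1, so never qualifies).\<close>
definition has_aff_dim :: "(nat \<Rightarrow> real) set \<Rightarrow> nat \<Rightarrow> bool" where
  "has_aff_dim F j \<longleftrightarrow> (\<exists>p. (\<forall>l\<le>j. p l \<in> F) \<and> aff_indep_pts j p) \<and>
     \<not> (\<exists>p. (\<forall>l\<le>Suc j. p l \<in> F) \<and> aff_indep_pts (Suc j) p)"

definition f_half_open :: "nat \<Rightarrow> nat \<Rightarrow> nat \<Rightarrow> nat" where
  "f_half_open n k j = card {F \<inter> half_open_hypersimplex n k | F.
      fface_of F (hypersimplex n k) \<and> has_aff_dim F j \<and> F \<inter> half_open_hypersimplex n k \<noteq> {}}"

end

theory Submission
  imports Defs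
begin


datatype con = Lo nat | Hi nat | Top | Bot

definition cv :: "nat \<Rightarrow> nat \<Rightarrow> con \<Rightarrow> (nat \<Rightarrow> real) \<Rightarrow> real" where
  "cv n k c x = (case c of Lo i \<Rightarrow> x i | Hi i \<Rightarrow> 1 - x i
     | Top \<Rightarrow> real k - (\<Sum>i<n. x i) | Bot \<Rightarrow> (\<Sum>i<n. x i) - (real k - 1))"

definition CS :: "nat \<Rightarrow> con set" where
  "CS n = Lo ` {..<n} \<union> Hi ` {..<n} \<union> {Top, Bot}"

lemma finite_Cons[simp]: "finite (CS n)" by (simp add: CS_def)

abbreviation P where "P n k \<equiv> hypersimplex n k"
abbreviation H where "H n k \<equiv> half_open_hypersimplex n k"

lemma P_char: "x \<in> P n k \<longleftrightarrow> (\<forall>i. n \<le> i \<longrightarrow> x i = 0) \<and> (\<forall>c\<in>CS n. 0 \<le> cv n k c x)"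
proof -
  have "(\<forall>c\<in>CS n. 0 \<le> cv n k c x) \<longleftrightarrow> (\<forall>i<n. 0 \<le> x i \<and> x i \<le> 1)
     \<and> real k - 1 \<le> (\<Sum>i<n. x i) \<and> (\<Sum>i<n. x i) \<le> real k"
  proof
    assume a: "\<forall>c\<in>CS n. 0 \<le> cv n k c x"
    have "\<forall>i<n. 0 \<le> x i \<and> x i \<le> 1"
    proof (intro allI impI)
      fix i assume "i < n"
      then have "Lo i \<in> CS n" "Hi i \<in> CS n" by (auto simp: CS_def)
      then show "0 \<le> x i \<and> x i \<le> 1" using a by (auto simp: cv_def)
    qed
    moreover have "Top \<in> CS n" "Bot \<in> CS n" by (auto simp: CS_def)
    ultimately show "(\<forall>i<n. 0 \<le> x i \<and> x i \<le> 1)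
     \<and> real k - 1 \<le> (\<Sum>i<n. x i) \<and> (\<Sum>i<n. x i) \<le> real k" using a by (auto simp: cv_def)
    next
    assume a: "(\<forall>i<n. 0 \<le> x i \<and> x i \<le> 1)
     \<and> real k - 1 \<le> (\<Sum>i<n. x i) \<and> (\<Sum>i<n. x i) \<le> real k"
    show "\<forall>c\<in>CS n. 0 \<le> cv n k c x"
    proof
      fix c assume "c \<in> CS n"
      then consider i where "i < n" "c = Lo i" | i where "i < n" "c = Hi i" | "c = Top" | "c = Bot"
        unfolding CS_def by blast
      then show "0 \<le> cv n k c x" using a by cases (auto simp: cv_def)
    qed
  qed
  then show ?thesis unfolding hypersimplex_def by auto
qed

lemma H_char: "x \<in> H n k \<longleftrightarrow> x \<in> P n k \<and> 0 < cv n k Bot x"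
  unfolding hypersimplex_def half_open_hypersimplex_def cv_def by auto

lemma P_coord: "x \<in> P n k \<Longrightarrow> 0 \<le> x i \<and> x i \<le> 1"
  unfolding hypersimplex_def by (cases "i < n") auto

lemma P_sum: "x \<in> P n k \<Longrightarrow> real k - 1 \<le> (\<Sum>i<n. x i) \<and> (\<Sum>i<n. x i) \<le> real k"
  unfolding hypersimplex_def by auto

lemma P_nonneg: assumes "x \<in> P n k" shows "0 \<le> cv n k c x"
proof (cases c)
  case (Lo i) then show ?thesis using P_coord[OF assms, of i] by (simp add: cv_def)
next
  case (Hi i) then show ?thesis using P_coord[OF assms, of i] by (simp add: cv_def)
qed (use P_sum[OF assms] in \<open>auto simp: cv_def\<close>)

lemma P_le1: assumes "x \<in> P n k" shows "cv n k c x \<le> 1"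
proof (cases c)
  case (Lo i) then show ?thesis using P_coord[OF assms, of i] by (simp add: cv_def)
next
  case (Hi i) then show ?thesis using P_coord[OF assms, of i] by (simp add: cv_def)
qed (use P_sum[OF assms] in \<open>auto simp: cv_def\<close>)

lemma cv_affine:
  assumes "a + b = 1"
  shows "cv n k c (\<lambda>i. a * x i + b * y i) = a * cv n k c x + b * cv n k c y"
proof -
  have s: "(\<Sum>i<n. a * x i + b * y i) = a * (\<Sum>i<n. x i) + b * (\<Sum>i<n. y i)"
    by (simp add: sum.distrib sum_distrib_left)
  have b: "b = 1 - a" using assms by simp
  show ?thesis unfolding cv_def using s by (cases c) (auto simp: algebra_simps b)
qed

definition G :: "nat \<Rightarrow> nat \<Rightarrow> con set \<Rightarrow> (nat \<Rightarrow> real) set" where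
  "G n k T = {x \<in> P n k. \<forall>c\<in>T. cv n k c x = 0}"

definition tight :: "nat \<Rightarrow> nat \<Rightarrow> (nat \<Rightarrow> real) set \<Rightarrow> con set" where
  "tight n k F = {c \<in> CS n. \<forall>x\<in>F. cv n k c x = 0}"

lemma P_comb:
  assumes "x \<in> P n k" "y \<in> P n k" "a + b = 1" "0 \<le> a" "0 \<le> b"
  shows "(\<lambda>i. a * x i + b * y i) \<in> P n k"
  unfolding P_char
proof (intro conjI allI impI ballI)
  fix i assume "n \<le> i" then show "a * x i + b * y i = 0"
    using assms(1,2) unfolding P_char by auto
next
  fix c assume "c \<in> CS n"
  have "0 \<le> a * cv n k c x + b * cv n k c y"
    using P_nonneg[OF assms(1)] P_nonneg[OF assms(2)] assms(4,5) by simp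
  then show "0 \<le> cv n k c (\<lambda>i. a * x i + b * y i)" using cv_affine[OF assms(3)] by simp
qed

lemma G_sub: "G n k T \<subseteq> P n k" unfolding G_def by auto

lemma G_comb:
  assumes "x \<in> G n k T" "y \<in> G n k T" "a + b = 1" "0 \<le> a" "0 \<le> b"
  shows "(\<lambda>i. a * x i + b * y i) \<in> G n k T"
  using assms P_comb[of x n k y a b] cv_affine[OF assms(3)] unfolding G_def by auto

lemma G_convex: "fconvex (G n k T)"
  unfolding fconvex_def using G_comb by (metis diff_add_cancel diff_ge_0_iff_ge)

lemma fopen_segmentE:
  assumes "x \<in> fopen_segment a b"
  obtains u where "0 \<le> u" "u \<le> 1" "x = (\<lambda>i. (1 - u) * a i + u * b i)" "x \<noteq> a" "x \<noteq> b"
  using assms unfolding fopen_segment_def fclosed_segment_def by auto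

lemma G_face: "fface_of (G n k T) (P n k)"
  unfolding fface_of_def
proof (intro conjI G_sub G_convex; intro ballI impI)
  fix a b x assume a: "a \<in> P n k" and b: "b \<in> P n k" and x: "x \<in> G n k T"
    and s: "x \<in> fopen_segment a b"
  obtain u where u: "0 \<le> u" "u \<le> 1" "x = (\<lambda>i. (1 - u) * a i + u * b i)" "x \<noteq> a" "x \<noteq> b"
    using fopen_segmentE[OF s] by blast
  have u0: "u \<noteq> 0" using u by auto
  have u1: "u \<noteq> 1" using u by auto
  have "\<forall>c\<in>T. cv n k c a = 0 \<and> cv n k c b = 0"
  proof
    fix c assume "c \<in> T"
    then have "cv n k c x = 0" using x unfolding G_def by auto
    then have e: "(1 - u) * cv n k c a + u * cv n k c b = 0"
      using cv_affine[of "1 - u" u n k c a b] u(3) by simp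
    have p1: "0 \<le> (1 - u) * cv n k c a" using P_nonneg[OF a] u by simp
    have p2: "0 \<le> u * cv n k c b" using P_nonneg[OF b] u by simp
    have "(1 - u) * cv n k c a = 0" "u * cv n k c b = 0" using e p1 p2 by linarith+
    then show "cv n k c a = 0 \<and> cv n k c b = 0" using u0 u1 by simp
  qed
  then show "a \<in> G n k T \<and> b \<in> G n k T" using a b unfolding G_def by auto
qed

lemma mix:
  assumes "finite C" "F \<subseteq> P n k" "fconvex F" "F \<noteq> {}" "\<forall>c\<in>C. \<exists>w\<in>F. 0 < cv n k c w"
  shows "\<exists>x\<in>F. \<forall>c\<in>C. 0 < cv n k c x"
  using assms(1,5)
proof (induction C rule: finite_induct)
  case empty then show ?case using assms(4) by auto
next
  case (insert c C)
  then obtain x where x: "x \<in> F" "\<forall>c\<in>C. 0 < cv n k c x" by auto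
  obtain w where w: "w \<in> F" "0 < cv n k c w" using insert by auto
  define m where "m = (\<lambda>i. (1 - 1/2) * x i + (1/2::real) * w i)"
  have "\<forall>u::real. 0 \<le> u \<and> u \<le> 1 \<longrightarrow> (\<lambda>i. (1 - u) * x i + u * w i) \<in> F"
    using assms(3) x(1) w(1) unfolding fconvex_def by blast
  from this[rule_format, of "1/2"] have mF: "m \<in> F" unfolding m_def by simp
  have xP: "x \<in> P n k" "w \<in> P n k" using x w assms(2) by auto
  have cvm: "\<And>d. cv n k d m = (1 - 1/2) * cv n k d x + (1/2) * cv n k d w"
    unfolding m_def by (rule cv_affine) simp
  have "\<forall>d\<in>insert c C. 0 < cv n k d m"
  proof
    fix d assume "d \<in> insert c C"
    then have "0 < cv n k d x \<or> 0 < cv n k d w" using x w by auto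
    then show "0 < cv n k d m" using cvm[of d] P_nonneg[OF xP(1), of d] P_nonneg[OF xP(2), of d]
      by auto
  qed
  then show ?case using mF by auto
qed

lemma face_eq_G:
  assumes face: "fface_of F (P n k)" and ne: "F \<noteq> {}"
  shows "F = G n k (tight n k F)"
proof
  show "F \<subseteq> G n k (tight n k F)" using face unfolding fface_of_def G_def tight_def by auto
next
  have FP: "F \<subseteq> P n k" and cvx: "fconvex F" using face unfolding fface_of_def by auto
  let ?NT = "CS n - tight n k F"
  have "\<forall>c\<in>?NT. \<exists>w\<in>F. 0 < cv n k c w"
  proof
    fix c assume "c \<in> ?NT"
    then obtain w where "w \<in> F" "cv n k c w \<noteq> 0" unfolding tight_def by auto
    then show "\<exists>w\<in>F. 0 < cv n k c w" using P_nonneg[of w n k c] FP by force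
  qed
  then obtain x where xF: "x \<in> F" and xpos: "\<forall>c\<in>?NT. 0 < cv n k c x"
    using mix[of ?NT F n k] FP cvx ne by auto
  have xP: "x \<in> P n k" using xF FP by auto
  show "G n k (tight n k F) \<subseteq> F"
  proof
    fix y assume y: "y \<in> G n k (tight n k F)"
    have yP: "y \<in> P n k" using y G_sub by auto
    show "y \<in> F"
    proof (cases "y = x")
      case True then show ?thesis using xF by simp
    next
      case False
      define S where "S = insert 1 ((\<lambda>c. cv n k c x) ` ?NT)"
      define e where "e = Min S"
      have fS: "finite S" "S \<noteq> {}" unfolding S_def by auto
      have e_pos: "0 < e" unfolding e_def using fS xpos by (auto simp: S_def Min_gr_iff)
      have e_le: "\<And>c. c \<in> ?NT \<Longrightarrow> e \<le> cv n k c x" unfolding e_def S_def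
        by (intro Min_le) auto
      define z where "z = (\<lambda>i. (1 + e) * x i + (- e) * y i)"
      have cvz: "\<And>c. cv n k c z = (1 + e) * cv n k c x + (- e) * cv n k c y"
        unfolding z_def by (rule cv_affine) simp
      have zP: "z \<in> P n k" unfolding P_char
      proof (intro conjI allI impI ballI)
        fix i assume "n \<le> i" then show "z i = 0" using xP yP unfolding P_char z_def by auto
      next
        fix c assume cC: "c \<in> CS n"
        show "0 \<le> cv n k c z"
        proof (cases "c \<in> tight n k F")
          case True
          then have "cv n k c x = 0" "cv n k c y = 0" using xF y unfolding tight_def G_def by auto
          then show ?thesis using cvz by simp
        next
          case False
          then have "e \<le> cv n k c x" using e_le cC by auto
          moreover have "e * cv n k c y \<le> e" using P_le1[OF yP, of c] e_pos by simp
          moreover have "0 \<le> e * cv n k c x" using P_nonneg[OF xP, of c] e_pos by simp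
          ultimately show ?thesis using cvz[of c] by (simp add: algebra_simps)
        qed
      qed
      define u where "u = 1 / (1 + e)"
      have u1: "u * (1 + e) = 1" unfolding u_def using e_pos by simp
      have u2: "1 - u = u * e" using u1 by (simp add: algebra_simps)
      have xu: "x = (\<lambda>i. (1 - u) * y i + u * z i)"
      proof
        fix i
        have "(1 - u) * y i + u * z i = u * e * y i + (u * (1 + e)) * x i - u * e * y i"
          unfolding z_def u2 by (simp add: algebra_simps)
        then show "x i = (1 - u) * y i + u * z i" using u1 by simp
      qed
      have "x \<noteq> z"
      proof
        assume "x = z"
        then have "\<And>i. x i = (1 + e) * x i + (- e) * y i" unfolding z_def by metis
        then have h: "\<And>i. x i = (1 + e) * x i + (- e) * y i" .
        have "\<And>i. x i = y i"
        proof -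
          fix i
          have "e * (x i - y i) = (1 + e) * x i + (- e) * y i - x i" by (simp add: algebra_simps)
          also have "\<dots> = 0" using h[of i] by linarith
          finally show "x i = y i" using e_pos by simp
        qed
        then show False using False by auto
      qed
      moreover have "0 \<le> u" "u \<le> 1" unfolding u_def using e_pos by auto
      ultimately have "x \<in> fopen_segment y z" using False xu
        unfolding fopen_segment_def fclosed_segment_def by auto
      then show "y \<in> F" using face yP zP xF unfolding fface_of_def by blast
    qed
  qed
qed

lemma homog:
  fixes a :: "'e \<Rightarrow> 'l \<Rightarrow> real"
  assumes "finite E" "finite S" "card E < card S"
  shows "\<exists>c. (\<exists>l\<in>S. c l \<noteq> 0) \<and> (\<forall>e\<in>E. (\<Sum>l\<in>S. a e l * c l) = 0)"
  using assms
proof (induction E arbitrary: S a rule: finite_induct)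
  case empty
  then obtain l0 where "l0 \<in> S" by fastforce
  then show ?case by (intro exI[of _ "\<lambda>l. if l = l0 then 1 else 0"]) auto
next
  case (insert e E)
  show ?case
  proof (cases "\<forall>l\<in>S. a e l = 0")
    case True
    have "card E < card S" using insert by simp
    then obtain c where c: "\<exists>l\<in>S. c l \<noteq> 0" "\<forall>f\<in>E. (\<Sum>l\<in>S. a f l * c l) = 0"
      using insert.IH[of S a] insert.prems by auto
    then show ?thesis using True by (intro exI[of _ c]) auto
  next
    case False
    then obtain p where pS: "p \<in> S" and ap: "a e p \<noteq> 0" by auto
    define S' where "S' = S - {p}"
    define a' where "a' = (\<lambda>f l. a f l - a f p * a e l / a e p)"
    have fS': "finite S'" using insert.prems unfolding S'_def by auto
    have cS': "card E < card S'" using insert.prems insert.hyps pS unfolding S'_def by auto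
    obtain c' where c': "\<exists>l\<in>S'. c' l \<noteq> 0" "\<forall>f\<in>E. (\<Sum>l\<in>S'. a' f l * c' l) = 0"
      using insert.IH[OF fS' cS', of a'] by auto
    define c where "c = (\<lambda>l. if l = p then - (\<Sum>l\<in>S'. a e l * c' l) / a e p else c' l)"
    have split: "\<And>f. (\<Sum>l\<in>S. a f l * c l) = a f p * c p + (\<Sum>l\<in>S'. a f l * c' l)"
    proof -
      fix f
      have "(\<Sum>l\<in>S. a f l * c l) = a f p * c p + (\<Sum>l\<in>S'. a f l * c l)"
        unfolding S'_def using pS insert.prems by (simp add: sum.remove)
      moreover have "(\<Sum>l\<in>S'. a f l * c l) = (\<Sum>l\<in>S'. a f l * c' l)"
        by (rule sum.cong) (auto simp: c_def S'_def)
      ultimately show "(\<Sum>l\<in>S. a f l * c l) = a f p * c p + (\<Sum>l\<in>S'. a f l * c' l)" by simp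
    qed
    have "\<forall>f\<in>insert e E. (\<Sum>l\<in>S. a f l * c l) = 0"
    proof
      fix f assume f: "f \<in> insert e E"
      show "(\<Sum>l\<in>S. a f l * c l) = 0"
      proof (cases "f = e")
        case True
        then show ?thesis using split[of f] ap by (simp add: c_def)
      next
        case False
        then have fE: "f \<in> E" using f by auto
        have "(\<Sum>l\<in>S'. a' f l * c' l)
            = (\<Sum>l\<in>S'. a f l * c' l) - a f p / a e p * (\<Sum>l\<in>S'. a e l * c' l)"
          unfolding a'_def by (simp add: sum_subtractf sum_distrib_left algebra_simps)
        then have "(\<Sum>l\<in>S'. a f l * c' l) - a f p / a e p * (\<Sum>l\<in>S'. a e l * c' l) = 0"
          using c'(2) fE by simp
        then show ?thesis using split[of f] by (simp add: c_def)
      qed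
    qed
    moreover have "\<exists>l\<in>S. c l \<noteq> 0" using c'(1) unfolding c_def S'_def by auto
    ultimately show ?thesis by blast
  qed
qed

lemma aff_indep_mono:
  assumes "aff_indep_pts m p" "m' \<le> m"
  shows "aff_indep_pts m' p"
  unfolding aff_indep_pts_def
proof (rule allI, rule impI)
  fix c assume h: "(\<forall>i. (\<Sum>l\<le>m'. c l * p l i) = 0) \<and> (\<Sum>l\<le>m'. c l) = 0"
  define c' where "c' = (\<lambda>l. if l \<le> m' then c l else 0)"
  have e1: "\<And>g. (\<Sum>l\<le>m. c' l * g l) = (\<Sum>l\<le>m'. c l * g l)"
  proof -
    fix g :: "nat \<Rightarrow> real"
    have "(\<Sum>l\<le>m. c' l * g l) = (\<Sum>l\<in>{..m'} \<union> {m'<..m}. c' l * g l)"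
      using assms(2) by (intro sum.cong) auto
    also have "\<dots> = (\<Sum>l\<le>m'. c' l * g l) + (\<Sum>l\<in>{m'<..m}. c' l * g l)"
      by (rule sum.union_disjoint) auto
    also have "(\<Sum>l\<in>{m'<..m}. c' l * g l) = 0" by (intro sum.neutral) (auto simp: c'_def)
    also have "(\<Sum>l\<le>m'. c' l * g l) = (\<Sum>l\<le>m'. c l * g l)" by (intro sum.cong) (auto simp: c'_def)
    finally show "(\<Sum>l\<le>m. c' l * g l) = (\<Sum>l\<le>m'. c l * g l)" by simp
  qed
  have "(\<forall>i. (\<Sum>l\<le>m. c' l * p l i) = 0) \<and> (\<Sum>l\<le>m. c' l) = 0"
    using h e1[of "\<lambda>l. 1"] e1 by simp
  then have h0: "\<forall>l\<le>m. c' l = 0" using assms(1) unfolding aff_indep_pts_def by blast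
  show "\<forall>l\<le>m'. c l = 0"
  proof (intro allI impI)
    fix l assume l: "l \<le> m'"
    from h0 l have "c' l = 0" using assms(2) by simp
    then show "c l = 0" using l unfolding c'_def by simp
  qed
qed

lemma UB1:
  assumes "finite W" "\<forall>x\<in>F. \<forall>i. i \<notin> W \<longrightarrow> x i = b i" "card W < m"
  shows "\<not> (\<exists>p. (\<forall>l\<le>m. p l \<in> F) \<and> aff_indep_pts m p)"
proof
  assume "\<exists>p. (\<forall>l\<le>m. p l \<in> F) \<and> aff_indep_pts m p"
  then obtain p where pF: "\<forall>l\<le>m. p l \<in> F" and ind: "aff_indep_pts m p" by blast
  define E where "E = insert None (Some ` W)"
  define a where "a = (\<lambda>e l. case e of None \<Rightarrow> 1 | Some i \<Rightarrow> p l i)"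
  have "card E \<le> card W + 1" unfolding E_def
    using assms(1) by (simp add: card_image)
  then have "card E < card {..m}" using assms(3) by simp
  then obtain c where c: "\<exists>l\<in>{..m}. c l \<noteq> 0" "\<forall>e\<in>E. (\<Sum>l\<in>{..m}. a e l * c l) = 0"
    using homog[of E "{..m}" a] assms(1) unfolding E_def by auto
  have s0: "(\<Sum>l\<le>m. c l) = 0" using c(2) unfolding E_def a_def by auto
  have "\<forall>i. (\<Sum>l\<le>m. c l * p l i) = 0"
  proof
    fix i show "(\<Sum>l\<le>m. c l * p l i) = 0"
    proof (cases "i \<in> W")
      case True
      then have "(\<Sum>l\<le>m. p l i * c l) = 0" using c(2) unfolding E_def a_def by auto
      then show ?thesis by (simp add: mult.commute)
    next
      case False
      then have "(\<Sum>l\<le>m. c l * p l i) = (\<Sum>l\<le>m. c l * b i)"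
        using pF assms(2) by (intro sum.cong) auto
      also have "\<dots> = 0" using s0 by (simp add: sum_distrib_right[symmetric])
      finally show ?thesis .
    qed
  qed
  then have "\<forall>l\<le>m. c l = 0" using ind s0 unfolding aff_indep_pts_def by blast
  then show False using c(1) by auto
qed

lemma UB2:
  assumes "finite W" "w0 \<in> W" "\<forall>x\<in>F. \<forall>i. i \<notin> W \<longrightarrow> x i = b i"
    "\<forall>x\<in>F. (\<Sum>i\<in>W. x i) = K" "card W \<le> m"
  shows "\<not> (\<exists>p. (\<forall>l\<le>m. p l \<in> F) \<and> aff_indep_pts m p)"
proof
  assume "\<exists>p. (\<forall>l\<le>m. p l \<in> F) \<and> aff_indep_pts m p"
  then obtain p where pF: "\<forall>l\<le>m. p l \<in> F" and ind: "aff_indep_pts m p" by blast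
  define W' where "W' = W - {w0}"
  define E where "E = insert None (Some ` W')"
  define a where "a = (\<lambda>e l. case e of None \<Rightarrow> 1 | Some i \<Rightarrow> p l i)"
  have fW': "finite W'" using assms(1) unfolding W'_def by auto
  have cW': "card W' + 1 = card W" using assms(1,2) unfolding W'_def
    by (metis Suc_eq_plus1 card_Suc_Diff1)
  have "card E \<le> card W' + 1" unfolding E_def
    using fW' by (simp add: card_image)
  then have "card E < card {..m}" using assms(5) cW' by simp
  then obtain c where c: "\<exists>l\<in>{..m}. c l \<noteq> 0" "\<forall>e\<in>E. (\<Sum>l\<in>{..m}. a e l * c l) = 0"
    using homog[of E "{..m}" a] fW' unfolding E_def by auto
  have s0: "(\<Sum>l\<le>m. c l) = 0" using c(2) unfolding E_def a_def by auto
  have inW': "\<And>i. i \<in> W' \<Longrightarrow> (\<Sum>l\<le>m. c l * p l i) = 0"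
  proof -
    fix i assume "i \<in> W'"
    then have "(\<Sum>l\<le>m. p l i * c l) = 0" using c(2) unfolding E_def a_def by auto
    then show "(\<Sum>l\<le>m. c l * p l i) = 0" by (simp add: mult.commute)
  qed
  have "\<forall>i. (\<Sum>l\<le>m. c l * p l i) = 0"
  proof
    fix i show "(\<Sum>l\<le>m. c l * p l i) = 0"
    proof (cases "i \<in> W")
      case True
      show ?thesis
      proof (cases "i = w0")
        case False then show ?thesis using True inW' unfolding W'_def by auto
      next
        case True
        have pw: "\<And>l. l \<le> m \<Longrightarrow> p l w0 = K - (\<Sum>i\<in>W'. p l i)"
        proof -
          fix l assume "l \<le> m"
          then have "(\<Sum>i\<in>W. p l i) = K" using pF assms(4) by auto
          moreover have "(\<Sum>i\<in>W. p l i) = p l w0 + (\<Sum>i\<in>W'. p l i)"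
            unfolding W'_def using assms(1,2) by (simp add: sum.remove)
          ultimately show "p l w0 = K - (\<Sum>i\<in>W'. p l i)" by simp
        qed
        have "(\<Sum>l\<le>m. c l * p l i) = (\<Sum>l\<le>m. c l * K - (\<Sum>j\<in>W'. c l * p l j))"
          using True pw by (intro sum.cong) (auto simp: right_diff_distrib sum_distrib_left)
        also have "\<dots> = (\<Sum>l\<le>m. c l) * K - (\<Sum>j\<in>W'. \<Sum>l\<le>m. c l * p l j)"
          by (simp add: sum_subtractf sum_distrib_right sum.swap[of _ W'])
        also have "\<dots> = 0" using s0 inW' by simp
        finally show ?thesis .
      qed
    next
      case False
      then have "(\<Sum>l\<le>m. c l * p l i) = (\<Sum>l\<le>m. c l * b i)"
        using pF assms(3) by (intro sum.cong) auto
      also have "\<dots> = 0" using s0 by (simp add: sum_distrib_right[symmetric])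
      finally show ?thesis .
    qed
  qed
  then have "\<forall>l\<le>m. c l = 0" using ind s0 unfolding aff_indep_pts_def by blast
  then show False using c(1) by auto
qed

definition mkT :: "nat set \<Rightarrow> nat set \<Rightarrow> bool \<Rightarrow> con set" where
  "mkT Z V t = Lo ` Z \<union> Hi ` V \<union> (if t then {Top} else {})"

lemma sum_split:
  fixes x :: "nat \<Rightarrow> real" and n :: nat
  assumes "U \<subseteq> {..<n}" "V \<subseteq> {..<n}" "U \<inter> V = {}"
    "\<forall>i\<in>{..<n}-U-V. x i = 0" "\<forall>i\<in>V. x i = 1"
  shows "(\<Sum>i<n. x i) = real (card V) + (\<Sum>i\<in>U. x i)"
proof -
  have fin: "finite {..<n}" by simp
  have "(\<Sum>i<n. x i) = (\<Sum>i\<in>{..<n} - U. x i) + (\<Sum>i\<in>U. x i)"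
    using sum.subset_diff[OF assms(1) fin, of x] .
  moreover have "(\<Sum>i\<in>{..<n} - U. x i) = (\<Sum>i\<in>{..<n} - U - V. x i) + (\<Sum>i\<in>V. x i)"
    using assms(2,3) by (subst sum.subset_diff[of V]) auto
  moreover have "(\<Sum>i\<in>{..<n} - U - V. x i) = 0" using assms(4) by simp
  moreover have "(\<Sum>i\<in>V. x i) = real (card V)" using assms(5) by simp
  ultimately show ?thesis by simp
qed

lemma G_char:
  assumes UO: "U \<subseteq> {..<n}" "V \<subseteq> {..<n}" "U \<inter> V = {}"
  shows "x \<in> G n k (mkT ({..<n}-U-V) V t) \<longleftrightarrow>
    (\<forall>i. n \<le> i \<longrightarrow> x i = 0) \<and> (\<forall>i\<in>U. 0 \<le> x i \<and> x i \<le> 1) \<and>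
    (\<forall>i\<in>{..<n}-U-V. x i = 0) \<and> (\<forall>i\<in>V. x i = 1) \<and>
    real k - 1 \<le> real (card V) + (\<Sum>i\<in>U. x i) \<and> real (card V) + (\<Sum>i\<in>U. x i) \<le> real k \<and>
    (t \<longrightarrow> real (card V) + (\<Sum>i\<in>U. x i) = real k)" (is "?L \<longleftrightarrow> ?R")
proof
  assume L: ?L
  then have xP: "x \<in> P n k" and T: "\<forall>c\<in>mkT ({..<n}-U-V) V t. cv n k c x = 0"
    unfolding G_def by auto
  have z: "\<forall>i\<in>{..<n}-U-V. x i = 0"
  proof
    fix i assume "i \<in> {..<n}-U-V"
    then have "Lo i \<in> mkT ({..<n}-U-V) V t" unfolding mkT_def by auto
    then show "x i = 0" using T unfolding cv_def by fastforce
  qed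
  have o: "\<forall>i\<in>V. x i = 1"
  proof
    fix i assume "i \<in> V"
    then have "Hi i \<in> mkT ({..<n}-U-V) V t" unfolding mkT_def by auto
    then show "x i = 1" using T unfolding cv_def by fastforce
  qed
  have s: "(\<Sum>i<n. x i) = real (card V) + (\<Sum>i\<in>U. x i)" using sum_split[OF UO z o] .
  have tt: "t \<longrightarrow> (\<Sum>i<n. x i) = real k" using T unfolding mkT_def cv_def by auto
  show ?R using xP z o s tt P_coord[OF xP] unfolding hypersimplex_def by auto
next
  assume R: ?R
  have s: "(\<Sum>i<n. x i) = real (card V) + (\<Sum>i\<in>U. x i)" using sum_split[OF UO] R by blast
  have c: "\<forall>i<n. 0 \<le> x i \<and> x i \<le> 1"
  proof (intro allI impI)
    fix i assume "i < n"
    then have "i \<in> U \<or> i \<in> V \<or> i \<in> {..<n}-U-V" by auto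
    then show "0 \<le> x i \<and> x i \<le> 1" using R by auto
  qed
  have xP: "x \<in> P n k" unfolding hypersimplex_def using R c s by auto
  have "\<forall>c\<in>mkT ({..<n}-U-V) V t. cv n k c x = 0"
    unfolding mkT_def cv_def using R s by (auto split: if_splits)
  then show ?L using xP unfolding G_def by auto
qed

lemma mkT_simps[simp]:
  "Lo i \<in> mkT Z V t \<longleftrightarrow> i \<in> Z" "Hi i \<in> mkT Z V t \<longleftrightarrow> i \<in> V"
  "Top \<in> mkT Z V t \<longleftrightarrow> t" "Bot \<notin> mkT Z V t"
  unfolding mkT_def by auto

lemma mkT_sub: "Z \<subseteq> {..<n} \<Longrightarrow> V \<subseteq> {..<n} \<Longrightarrow> mkT Z V t \<subseteq> CS n"
  unfolding mkT_def CS_def by auto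

definition valid :: "nat \<Rightarrow> nat \<Rightarrow> nat set \<Rightarrow> nat set \<Rightarrow> bool \<Rightarrow> bool" where
  "valid n k U V t \<longleftrightarrow> U \<subseteq> {..<n} \<and> V \<subseteq> {..<n} \<and> U \<inter> V = {} \<and> card V < k \<and>
     (if t then k < card V + card U else k \<le> card V + card U)"

definition vval :: "nat \<Rightarrow> nat set \<Rightarrow> nat set \<Rightarrow> bool \<Rightarrow> real" where
  "vval k U V t = (if t then (real k - real (card V)) / real (card U)
                   else (real k - real (card V) - 1/2) / real (card U))"

definition xz :: "nat \<Rightarrow> nat set \<Rightarrow> nat set \<Rightarrow> bool \<Rightarrow> nat \<Rightarrow> real" where
  "xz k U V t = (\<lambda>i. if i \<in> V then 1 else if i \<in> U then vval k U V t else 0)"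

lemma valid_facts:
  assumes "valid n k U V t"
  shows "finite U" "card U \<ge> 1" "0 < vval k U V t" "vval k U V t < 1"
    "real (card U) * vval k U V t = (if t then real k - real (card V) else real k - real (card V) - 1/2)"
proof -
  have U: "U \<subseteq> {..<n}" using assms unfolding valid_def by auto
  show fU: "finite U" using U finite_subset by blast
  show d1: "card U \<ge> 1" using assms unfolding valid_def by (auto split: if_splits)
  have dpos: "0 < real (card U)" using d1 by simp
  show "real (card U) * vval k U V t = (if t then real k - real (card V) else real k - real (card V) - 1/2)"
    unfolding vval_def using dpos by auto
  have ineq: "if t then 0 < real k - real (card V) \<and> real k - real (card V) < real (card U)
     else 0 < real k - real (card V) - 1/2 \<and> real k - real (card V) - 1/2 < real (card U)"
    using assms unfolding valid_def by (auto split: if_splits)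
  show "0 < vval k U V t" using ineq dpos unfolding vval_def by (auto split: if_splits)
  show "vval k U V t < 1" using ineq dpos unfolding vval_def by (auto split: if_splits simp: divide_less_eq)
qed

lemma xz_sum:
  assumes "valid n k U V t"
  shows "(\<Sum>i<n. xz k U V t i) = (if t then real k else real k - 1/2)"
proof -
  have UV: "U \<subseteq> {..<n}" "V \<subseteq> {..<n}" "U \<inter> V = {}" using assms unfolding valid_def by auto
  have "(\<Sum>i<n. xz k U V t i) = real (card V) + (\<Sum>i\<in>U. xz k U V t i)"
    by (rule sum_split[OF UV]) (auto simp: xz_def)
  also have "(\<Sum>i\<in>U. xz k U V t i) = (\<Sum>i\<in>U. vval k U V t)"
    using UV by (intro sum.cong) (auto simp: xz_def)
  also have "\<dots> = real (card U) * vval k U V t" by simp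
  finally show ?thesis using valid_facts(5)[OF assms] by auto
qed

lemma xz_cv:
  assumes "valid n k U V t" "c \<in> CS n"
  shows "(c \<in> mkT ({..<n}-U-V) V t \<longrightarrow> cv n k c (xz k U V t) = 0) \<and>
         (c \<notin> mkT ({..<n}-U-V) V t \<longrightarrow> 0 < cv n k c (xz k U V t))"
proof -
  have UV: "U \<subseteq> {..<n}" "V \<subseteq> {..<n}" "U \<inter> V = {}" using assms unfolding valid_def by auto
  note vf = valid_facts[OF assms(1)]
  note sm = xz_sum[OF assms(1)]
  from assms(2) consider i where "i < n" "c = Lo i" | i where "i < n" "c = Hi i" | "c = Top" | "c = Bot"
    unfolding CS_def by blast
  then show ?thesis
  proof cases
    case 1 then show ?thesis using vf UV unfolding cv_def xz_def by auto
  next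
    case 2 then show ?thesis using vf UV unfolding cv_def xz_def by auto
  next
    case 3 then show ?thesis using sm unfolding cv_def by auto
  next
    case 4 then show ?thesis using sm unfolding cv_def by auto
  qed
qed

lemma xz_P:
  assumes "valid n k U V t"
  shows "xz k U V t \<in> G n k (mkT ({..<n}-U-V) V t)" "xz k U V t \<in> H n k"
proof -
  have UV: "U \<subseteq> {..<n}" "V \<subseteq> {..<n}" using assms unfolding valid_def by auto
  have P: "xz k U V t \<in> P n k" unfolding P_char
  proof (intro conjI allI impI ballI)
    fix i assume "n \<le> i" then show "xz k U V t i = 0" using UV unfolding xz_def by auto
  next
    fix c assume "c \<in> CS n"
    then show "0 \<le> cv n k c (xz k U V t)" using xz_cv[OF assms, of c] by (cases "c \<in> mkT ({..<n}-U-V) V t") auto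
  qed
  show "xz k U V t \<in> G n k (mkT ({..<n}-U-V) V t)" unfolding G_def
    using P xz_cv[OF assms] mkT_sub[of "{..<n}-U-V" n V t] UV by auto
  have "Bot \<in> CS n" unfolding CS_def by auto
  then show "xz k U V t \<in> H n k" unfolding H_char using P xz_cv[OF assms, of Bot] by auto
qed

lemma tight_valid:
  assumes "valid n k U V t" "xz k U V t \<in> S" "S \<subseteq> G n k (mkT ({..<n}-U-V) V t)"
  shows "tight n k S = mkT ({..<n}-U-V) V t"
proof
  have UV: "U \<subseteq> {..<n}" "V \<subseteq> {..<n}" using assms unfolding valid_def by auto
  show "mkT ({..<n}-U-V) V t \<subseteq> tight n k S"
    using assms(3) mkT_sub[of "{..<n}-U-V" n V t] UV unfolding tight_def G_def by auto
  show "tight n k S \<subseteq> mkT ({..<n}-U-V) V t"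
  proof
    fix c assume "c \<in> tight n k S"
    then have "c \<in> CS n" "cv n k c (xz k U V t) = 0" using assms(2) unfolding tight_def by auto
    then show "c \<in> mkT ({..<n}-U-V) V t" using xz_cv[OF assms(1), of c] by auto
  qed
qed

lemma sum_single:
  fixes f :: "'a \<Rightarrow> real"
  assumes "finite A" "a \<in> A" "\<forall>l\<in>A. l \<noteq> a \<longrightarrow> f l = 0"
  shows "sum f A = f a"
proof -
  have "sum f A = f a + sum f (A - {a})" using assms(1,2) by (simp add: sum.remove)
  moreover have "sum f (A - {a}) = 0" using assms(3) by (intro sum.neutral) auto
  ultimately show ?thesis by simp
qed

definition dimv :: "nat set \<Rightarrow> bool \<Rightarrow> nat" where
  "dimv U t = (if t then card U - 1 else card U)"

lemma LB_false:
  assumes va: "valid n k U V False"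
  shows "\<exists>p. (\<forall>l\<le>card U. p l \<in> G n k (mkT ({..<n}-U-V) V False)) \<and> aff_indep_pts (card U) p"
proof -
  have UV: "U \<subseteq> {..<n}" "V \<subseteq> {..<n}" "U \<inter> V = {}" using va unfolding valid_def by auto
  note vf = valid_facts[OF va]
  define d where "d = card U"
  have kd: "k \<le> card V + d" using va unfolding valid_def d_def by auto
  define v where "v = vval k U V False"
  have dv: "real d * v = real k - real (card V) - 1/2" using vf(5) unfolding v_def d_def by simp
  have dpos: "0 < real d" using vf(2) unfolding d_def by simp
  obtain h where h: "bij_betw h {0..<d} U" using ex_bij_betw_nat_finite[OF vf(1)] unfolding d_def by blast
  have hU: "\<And>q. q < d \<Longrightarrow> h q \<in> U" using h unfolding bij_betw_def by auto
  have hinj: "\<And>q r. q < d \<Longrightarrow> r < d \<Longrightarrow> h q = h r \<longleftrightarrow> q = r"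
    using h unfolding bij_betw_def inj_on_def by auto
  define e where "e = 1 / (2 * real d)"
  have epos: "0 < e" "e \<le> 1/2" using dpos vf(2) unfolding e_def d_def by (auto simp: field_simps)
  have ve: "v + e \<le> 1"
  proof -
    have de: "real d * e = 1/2" using dpos unfolding e_def by simp
    have "real d * (v + e) = real d * v + real d * e" by (simp add: algebra_simps)
    also have "\<dots> = real k - real (card V)" using dv de by simp
    also have "\<dots> \<le> real d" using kd by simp
    finally show ?thesis using dpos by simp
  qed
  have v0: "0 < v" using vf unfolding v_def by simp
  define p where "p = (\<lambda>l i. xz k U V False i + (if l \<noteq> 0 \<and> i = h (l - 1) then e else 0))"
  have pG: "\<forall>l\<le>d. p l \<in> G n k (mkT ({..<n}-U-V) V False)"
  proof (intro allI impI)
    fix l assume l: "l \<le> d"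
    have sU: "(\<Sum>i\<in>U. p l i) = real d * v + (if l \<noteq> 0 then e else 0)"
    proof -
      have "(\<Sum>i\<in>U. p l i) = (\<Sum>i\<in>U. v) + (\<Sum>i\<in>U. (if l \<noteq> 0 \<and> i = h (l - 1) then e else 0))"
        unfolding p_def sum.distrib using UV by (intro arg_cong2[where f="(+)"] sum.cong) (auto simp: xz_def v_def)
      also have "(\<Sum>i\<in>U. (if l \<noteq> 0 \<and> i = h (l - 1) then e else 0)) = (if l \<noteq> 0 then e else 0)"
      proof (cases "l = 0")
        case False
        then have "h (l - 1) \<in> U" using hU l by auto
        then show ?thesis using False vf(1) by (simp add: sum.delta')
      qed simp
      finally show ?thesis unfolding d_def by simp
    qed
    show "p l \<in> G n k (mkT ({..<n}-U-V) V False)"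
      unfolding G_char[OF UV]
    proof (intro conjI allI impI ballI)
      fix i assume "n \<le> i"
      then have "i \<notin> U" "i \<notin> V" using UV by auto
      moreover have "l \<noteq> 0 \<Longrightarrow> h (l - 1) \<in> U" using hU l by auto
      ultimately show "p l i = 0" unfolding p_def xz_def by auto
    next
      fix i assume "i \<in> U"
      then show "0 \<le> p l i" "p l i \<le> 1" unfolding p_def xz_def using UV v0 ve epos
        by (auto simp: v_def)
    next
      fix i assume i: "i \<in> {..<n} - U - V"
      moreover have "l \<noteq> 0 \<Longrightarrow> h (l - 1) \<in> U" using hU l by auto
      ultimately show "p l i = 0" unfolding p_def xz_def by auto
    next
      fix i assume i: "i \<in> V"
      moreover have "l \<noteq> 0 \<Longrightarrow> h (l - 1) \<in> U" using hU l by auto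
      ultimately show "p l i = 1" unfolding p_def xz_def using UV by auto
    next
      show "real k - 1 \<le> real (card V) + (\<Sum>i\<in>U. p l i)" using sU dv epos by auto
      show "real (card V) + (\<Sum>i\<in>U. p l i) \<le> real k" using sU dv epos by auto
    qed (simp)
  qed
  have ind: "aff_indep_pts d p"
    unfolding aff_indep_pts_def
  proof (rule allI, rule impI)
    fix c assume hc: "(\<forall>i. (\<Sum>l\<le>d. c l * p l i) = 0) \<and> (\<Sum>l\<le>d. c l) = 0"
    have cs: "\<And>q. q < d \<Longrightarrow> c (Suc q) = 0"
    proof -
      fix q assume q: "q < d"
      have "(\<Sum>l\<le>d. c l * p l (h q)) = (\<Sum>l\<le>d. c l * xz k U V False (h q))
          + (\<Sum>l\<le>d. c l * (if l \<noteq> 0 \<and> h q = h (l - 1) then e else 0))"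
        unfolding p_def by (simp add: sum.distrib algebra_simps)
      also have "(\<Sum>l\<le>d. c l * xz k U V False (h q)) = 0"
        using hc by (simp add: sum_distrib_right[symmetric])
      also have "(\<Sum>l\<le>d. c l * (if l \<noteq> 0 \<and> h q = h (l - 1) then e else 0)) = c (Suc q) * e"
      proof -
        have "(\<Sum>l\<le>d. c l * (if l \<noteq> 0 \<and> h q = h (l - 1) then e else 0))
            = (\<Sum>l\<le>d. if l = Suc q then c l * e else 0)"
        proof (rule sum.cong)
          fix l assume "l \<in> {..d}"
          then have "l \<noteq> 0 \<Longrightarrow> h q = h (l - 1) \<longleftrightarrow> l = Suc q" using hinj[of q "l - 1"] q by auto
          then show "c l * (if l \<noteq> 0 \<and> h q = h (l - 1) then e else 0) = (if l = Suc q then c l * e else 0)"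
            by auto
        qed simp
        also have "\<dots> = c (Suc q) * e" using q by simp
        finally show ?thesis by simp
      qed
      finally have "c (Suc q) * e = 0" using hc by simp
      then show "c (Suc q) = 0" using epos by simp
    qed
    have "(\<Sum>l\<le>d. c l) = c 0"
      by (rule sum_single) (use cs in \<open>auto simp: gr0_conv_Suc\<close>)
    then have c0: "c 0 = 0" using hc by simp
    show "\<forall>l\<le>d. c l = 0"
    proof (intro allI impI)
      fix l assume "l \<le> d"
      then show "c l = 0" using cs c0 by (cases l) auto
    qed
  qed
  show ?thesis using pG ind unfolding d_def by blast
qed

lemma LB_true:
  assumes va: "valid n k U V True"
  shows "\<exists>p. (\<forall>l\<le>card U - 1. p l \<in> G n k (mkT ({..<n}-U-V) V True)) \<and> aff_indep_pts (card U - 1) p"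
proof -
  have UV: "U \<subseteq> {..<n}" "V \<subseteq> {..<n}" "U \<inter> V = {}" using va unfolding valid_def by auto
  note vf = valid_facts[OF va]
  define d where "d = card U"
  have kd: "card V < k" "k < card V + d" using va unfolding valid_def d_def by auto
  define v where "v = vval k U V True"
  have dv: "real d * v = real k - real (card V)" using vf(5) unfolding v_def d_def by simp
  have dpos: "0 < real d" using vf(2) unfolding d_def by simp
  obtain h where h: "bij_betw h {0..<d} U" using ex_bij_betw_nat_finite[OF vf(1)] unfolding d_def by blast
  have hU: "\<And>q. q < d \<Longrightarrow> h q \<in> U" using h unfolding bij_betw_def by auto
  have hinj: "\<And>q r. q < d \<Longrightarrow> r < d \<Longrightarrow> h q = h r \<longleftrightarrow> q = r"
    using h unfolding bij_betw_def inj_on_def by auto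
  define e where "e = 1 / real d"
  have de: "real d * e = 1" using dpos unfolding e_def by simp
  have epos: "0 < e" using dpos unfolding e_def by simp
  have ve: "v + e \<le> 1"
  proof -
    have "real d * (v + e) = real d * v + real d * e" by (simp add: algebra_simps)
    also have "\<dots> \<le> real d" using dv de kd by simp
    finally show ?thesis using dpos by simp
  qed
  have ve2: "e \<le> v"
  proof -
    have "real d * e \<le> real d * v" using dv de kd by simp
    then show ?thesis using dpos by simp
  qed
  define p where "p = (\<lambda>l i. xz k U V True i + (if l \<noteq> 0 \<and> i = h l then e else 0)
                                          - (if l \<noteq> 0 \<and> i = h 0 then e else 0))"
  have d0: "0 < d" using vf(2) unfolding d_def by simp
  have pG: "\<forall>l\<le>d - 1. p l \<in> G n k (mkT ({..<n}-U-V) V True)"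
  proof (intro allI impI)
    fix l assume l: "l \<le> d - 1"
    have ld: "l < d" using l d0 by simp
    have h0U: "h 0 \<in> U" "h l \<in> U" using hU d0 ld by auto
    have hl0: "l \<noteq> 0 \<Longrightarrow> h l \<noteq> h 0" using hinj[of l 0] ld d0 by auto
    have sU: "(\<Sum>i\<in>U. p l i) = real d * v"
    proof -
      have "(\<Sum>i\<in>U. p l i) = (\<Sum>i\<in>U. v) + (\<Sum>i\<in>U. (if l \<noteq> 0 \<and> i = h l then e else 0))
         - (\<Sum>i\<in>U. (if l \<noteq> 0 \<and> i = h 0 then e else 0))"
        unfolding p_def sum_subtractf sum.distrib using UV
        by (intro arg_cong2[where f="(-)"] arg_cong2[where f="(+)"] sum.cong) (auto simp: xz_def v_def)
      also have "(\<Sum>i\<in>U. (if l \<noteq> 0 \<and> i = h l then e else 0)) = (if l \<noteq> 0 then e else 0)"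
        using h0U vf(1) by (cases "l = 0") (simp_all add: sum.delta')
      also have "(\<Sum>i\<in>U. (if l \<noteq> 0 \<and> i = h 0 then e else 0)) = (if l \<noteq> 0 then e else 0)"
        using h0U vf(1) by (cases "l = 0") (simp_all add: sum.delta')
      finally show ?thesis unfolding d_def by simp
    qed
    show "p l \<in> G n k (mkT ({..<n}-U-V) V True)"
      unfolding G_char[OF UV]
    proof (intro conjI allI impI ballI)
      fix i assume "n \<le> i"
      then have "i \<notin> U" "i \<notin> V" using UV by auto
      then show "p l i = 0" unfolding p_def xz_def using h0U by auto
    next
      fix i assume iU: "i \<in> U"
      have xi: "xz k U V True i = v" using iU UV unfolding xz_def v_def by auto
      show "0 \<le> p l i" unfolding p_def xi using ve ve2 epos hl0 by auto
      show "p l i \<le> 1" unfolding p_def xi using ve ve2 epos hl0 by auto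
    next
      fix i assume i: "i \<in> {..<n} - U - V"
      then show "p l i = 0" unfolding p_def xz_def using h0U by auto
    next
      fix i assume i: "i \<in> V"
      then show "p l i = 1" unfolding p_def xz_def using UV h0U by auto
    next
      show "real k - 1 \<le> real (card V) + (\<Sum>i\<in>U. p l i)" using sU dv by auto
      show "real (card V) + (\<Sum>i\<in>U. p l i) \<le> real k" using sU dv by auto
      show "real (card V) + (\<Sum>i\<in>U. p l i) = real k" using sU dv by auto
    qed
  qed
  have ind: "aff_indep_pts (d - 1) p"
    unfolding aff_indep_pts_def
  proof (rule allI, rule impI)
    fix c assume hc: "(\<forall>i. (\<Sum>l\<le>d - 1. c l * p l i) = 0) \<and> (\<Sum>l\<le>d - 1. c l) = 0"
    have cs: "\<And>q. 0 < q \<Longrightarrow> q \<le> d - 1 \<Longrightarrow> c q = 0"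
    proof -
      fix q assume q0: "0 < q" and q: "q \<le> d - 1"
      have qd: "q < d" using q d0 by simp
      have hq0: "h q \<noteq> h 0" using hinj[of q 0] qd q0 by auto
      have "(\<Sum>l\<le>d - 1. c l * p l (h q)) = (\<Sum>l\<le>d - 1. c l * xz k U V True (h q))
          + (\<Sum>l\<le>d - 1. c l * ((if l \<noteq> 0 \<and> h q = h l then e else 0) - (if l \<noteq> 0 \<and> h q = h 0 then e else 0)))"
        unfolding p_def sum.distrib[symmetric] by (rule sum.cong) (auto simp: algebra_simps)
      also have "(\<Sum>l\<le>d - 1. c l * xz k U V True (h q)) = 0"
        using hc by (simp add: sum_distrib_right[symmetric])
      also have "(\<Sum>l\<le>d - 1. c l * ((if l \<noteq> 0 \<and> h q = h l then e else 0) - (if l \<noteq> 0 \<and> h q = h 0 then e else 0)))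
            = (\<Sum>l\<le>d - 1. if l = q then c l * e else 0)"
      proof (rule sum.cong)
        fix l assume "l \<in> {..d - 1}"
        then have "l < d" using d0 by auto
        then have "h q = h l \<longleftrightarrow> l = q" using hinj[of q l] qd by auto
        then show "c l * ((if l \<noteq> 0 \<and> h q = h l then e else 0) - (if l \<noteq> 0 \<and> h q = h 0 then e else 0))
           = (if l = q then c l * e else 0)" using hq0 q0 by auto
      qed simp
      also have "\<dots> = c q * e" using q by simp
      finally have "c q * e = 0" using hc by simp
      then show "c q = 0" using epos by simp
    qed
    have "(\<Sum>l\<le>d - 1. c l) = c 0"
      by (rule sum_single) (use cs in auto)
    then have c0: "c 0 = 0" using hc by simp
    show "\<forall>l\<le>d - 1. c l = 0"
    proof (intro allI impI)
      fix l assume "l \<le> d - 1"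
      then show "c l = 0" using cs c0 by (cases "l = 0") auto
    qed
  qed
  show ?thesis using pG ind unfolding d_def by blast
qed

lemma G_outside:
  assumes UV: "U \<subseteq> {..<n}" "V \<subseteq> {..<n}" "U \<inter> V = {}"
  shows "\<forall>x\<in>G n k (mkT ({..<n}-U-V) V t). \<forall>i. i \<notin> U \<longrightarrow> x i = (if i \<in> V then 1 else 0)"
proof (intro ballI allI impI)
  fix x i assume x: "x \<in> G n k (mkT ({..<n}-U-V) V t)" and i: "i \<notin> U"
  have R: "(\<forall>i. n \<le> i \<longrightarrow> x i = 0) \<and> (\<forall>i\<in>{..<n}-U-V. x i = 0) \<and> (\<forall>i\<in>V. x i = 1)"
    using x unfolding G_char[OF UV] by auto
  show "x i = (if i \<in> V then 1 else 0)"
  proof (cases "i < n")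
    case True then show ?thesis using R i by auto
  next
    case False then show ?thesis using R UV by auto
  qed
qed

lemma aff_dim_unique:
  assumes "has_aff_dim F j" "has_aff_dim F j'"
  shows "j = j'"
proof (rule ccontr)
  assume "j \<noteq> j'"
  then consider "j < j'" | "j' < j" by linarith
  then show False
  proof cases
    case 1
    obtain p where "\<forall>l\<le>j'. p l \<in> F" "aff_indep_pts j' p" using assms(2) unfolding has_aff_dim_def by blast
    then have "\<forall>l\<le>Suc j. p l \<in> F" "aff_indep_pts (Suc j) p" using 1 aff_indep_mono by auto
    then show False using assms(1) unfolding has_aff_dim_def by blast
  next
    case 2
    obtain p where "\<forall>l\<le>j. p l \<in> F" "aff_indep_pts j p" using assms(1) unfolding has_aff_dim_def by blast
    then have "\<forall>l\<le>Suc j'. p l \<in> F" "aff_indep_pts (Suc j') p" using 2 aff_indep_mono by auto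
    then show False using assms(2) unfolding has_aff_dim_def by blast
  qed
qed

lemma dim_valid:
  assumes va: "valid n k U V t"
  shows "has_aff_dim (G n k (mkT ({..<n}-U-V) V t)) (dimv U t)"
proof -
  have UV: "U \<subseteq> {..<n}" "V \<subseteq> {..<n}" "U \<inter> V = {}" using va unfolding valid_def by auto
  note vf = valid_facts[OF va]
  note out = G_outside[OF UV, of k t]
  show ?thesis
  proof (cases t)
    case True
    obtain w0 where w0: "w0 \<in> U" using vf(2) by fastforce
    have sumK: "\<forall>x\<in>G n k (mkT ({..<n}-U-V) V t). (\<Sum>i\<in>U. x i) = real k - real (card V)"
    proof
      fix x assume "x \<in> G n k (mkT ({..<n}-U-V) V t)"
      then have "t \<longrightarrow> real (card V) + (\<Sum>i\<in>U. x i) = real k" using G_char[OF UV, of x k t] by blast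
      then show "(\<Sum>i\<in>U. x i) = real k - real (card V)" using True by simp
    qed
    have "\<not> (\<exists>p. (\<forall>l\<le>Suc (card U - 1). p l \<in> G n k (mkT ({..<n}-U-V) V t)) \<and> aff_indep_pts (Suc (card U - 1)) p)"
      by (rule UB2[OF vf(1) w0 out sumK]) simp
    then show ?thesis using LB_true[of n k U V] va True unfolding has_aff_dim_def dimv_def by auto
  next
    case False
    have "\<not> (\<exists>p. (\<forall>l\<le>Suc (card U). p l \<in> G n k (mkT ({..<n}-U-V) V t)) \<and> aff_indep_pts (Suc (card U)) p)"
      by (rule UB1[OF vf(1) out]) simp
    then show ?thesis using LB_false[of n k U V] va False unfolding has_aff_dim_def dimv_def by auto
  qed
qed

lemma classify:
  assumes face: "fface_of F (P n k)" and dim: "has_aff_dim F j" and j1: "1 \<le> j"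
    and FH: "F \<inter> H n k \<noteq> {}"
  shows "\<exists>U V t. valid n k U V t \<and> dimv U t = j \<and> F = G n k (mkT ({..<n}-U-V) V t)"
proof -
  define T0 where "T0 = tight n k F"
  have ne: "F \<noteq> {}" using FH by auto
  have FG: "F = G n k T0" unfolding T0_def by (rule face_eq_G[OF face ne])
  define Z where "Z = {i. i < n \<and> Lo i \<in> T0}"
  define V where "V = {i. i < n \<and> Hi i \<in> T0}"
  define t where "t = (Top \<in> T0)"
  define U where "U = {..<n} - Z - V"
  obtain y where yF: "y \<in> F" and yH: "y \<in> H n k" using FH by auto
  have T0C: "T0 \<subseteq> CS n" unfolding T0_def tight_def by auto
  have botn: "Bot \<notin> T0"
  proof
    assume "Bot \<in> T0"
    then have "cv n k Bot y = 0" using yF unfolding T0_def tight_def by auto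
    then show False using yH unfolding H_char by simp
  qed
  have T0eq: "T0 = mkT Z V t"
  proof
    show "T0 \<subseteq> mkT Z V t"
    proof
      fix c assume c: "c \<in> T0"
      then have "c \<in> CS n" using T0C by auto
      then show "c \<in> mkT Z V t" using c botn unfolding CS_def Z_def V_def t_def by auto
    qed
    show "mkT Z V t \<subseteq> T0" unfolding mkT_def Z_def V_def t_def by auto
  qed
  have ZV: "Z \<inter> V = {}"
  proof (rule ccontr)
    assume "Z \<inter> V \<noteq> {}"
    then obtain i where "Lo i \<in> T0" "Hi i \<in> T0" unfolding Z_def V_def by auto
    then have "y i = 0" "1 - y i = 0" using yF unfolding T0_def tight_def cv_def by auto
    then show False by simp
  qed
  have Zeq: "{..<n} - U - V = Z" unfolding U_def using ZV by (auto simp: Z_def)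
  have UV: "U \<subseteq> {..<n}" "V \<subseteq> {..<n}" "U \<inter> V = {}" unfolding U_def V_def by auto
  have FG2: "F = G n k (mkT ({..<n}-U-V) V t)" using FG T0eq Zeq by simp
  have fU: "finite U" using UV finite_subset by blast
  have Fc: "(\<forall>i. n \<le> i \<longrightarrow> x i = 0) \<and> (\<forall>i\<in>U. 0 \<le> x i \<and> x i \<le> 1) \<and>
    (\<forall>i\<in>{..<n}-U-V. x i = 0) \<and> (\<forall>i\<in>V. x i = 1) \<and>
    real k - 1 \<le> real (card V) + (\<Sum>i\<in>U. x i) \<and> real (card V) + (\<Sum>i\<in>U. x i) \<le> real k \<and>
    (t \<longrightarrow> real (card V) + (\<Sum>i\<in>U. x i) = real k)" if xF: "x \<in> F" for x
  proof -
    have "x \<in> G n k (mkT ({..<n}-U-V) V t)" using FG2 xF by simp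
    then show ?thesis unfolding G_char[OF UV] .
  qed
  have Fsum: "\<And>x. x \<in> F \<Longrightarrow> (\<Sum>i<n. x i) = real (card V) + (\<Sum>i\<in>U. x i)"
  proof -
    fix x assume "x \<in> F"
    from Fc[OF this] show "(\<Sum>i<n. x i) = real (card V) + (\<Sum>i\<in>U. x i)" using sum_split[OF UV] by blast
  qed
  have sU0: "\<And>x. x \<in> F \<Longrightarrow> 0 \<le> (\<Sum>i\<in>U. x i)" using Fc by (meson sum_nonneg)
  have sUd: "\<And>x. x \<in> F \<Longrightarrow> (\<Sum>i\<in>U. x i) \<le> real (card U)"
  proof -
    fix x assume "x \<in> F"
    then have "(\<Sum>i\<in>U. x i) \<le> (\<Sum>i\<in>U. 1)" using Fc by (intro sum_mono) auto
    then show "(\<Sum>i\<in>U. x i) \<le> real (card U)" by simp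
  qed
  have dj: "j \<le> card U"
  proof (rule ccontr)
    assume "\<not> j \<le> card U"
    then have "\<not> (\<exists>p. (\<forall>l\<le>j. p l \<in> F) \<and> aff_indep_pts j p)"
      using UB1[OF fU G_outside[OF UV, of k t], of j] FG2 by auto
    then show False using dim unfolding has_aff_dim_def by blast
  qed
  then have "U \<noteq> {}" using j1 by auto
  then obtain i0 where i0: "i0 \<in> U" by blast
  have lo: "\<exists>x\<in>F. x i0 \<noteq> 0"
  proof -
    have "Lo i0 \<notin> T0" "Lo i0 \<in> CS n" using i0 UV unfolding Z_def U_def CS_def by auto
    then show ?thesis unfolding T0_def tight_def cv_def by auto
  qed
  have hi: "\<exists>x\<in>F. x i0 \<noteq> 1"
  proof -
    have "Hi i0 \<notin> T0" "Hi i0 \<in> CS n" using i0 UV unfolding V_def U_def CS_def by auto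
    then show ?thesis unfolding T0_def tight_def cv_def by auto
  qed
  have valid: "valid n k U V t"
  proof (cases t)
    case True
    obtain x where x: "x \<in> F" "x i0 \<noteq> 0" using lo by auto
    have "x i0 \<le> (\<Sum>i\<in>U. x i)" using Fc[OF x(1)] i0 fU by (intro member_le_sum) auto
    then have "0 < (\<Sum>i\<in>U. x i)" using x Fc[OF x(1)] i0 by force
    then have k1: "card V < k" using Fc[OF x(1)] True by auto
    obtain x' where x': "x' \<in> F" "x' i0 \<noteq> 1" using hi by auto
    have cU: "card U \<ge> 1" using fU i0 by (auto simp: Suc_le_eq card_gt_0_iff)
    have e1: "(\<Sum>i\<in>U. x' i) = x' i0 + (\<Sum>i\<in>U - {i0}. x' i)" using fU i0 by (simp add: sum.remove)
    have e2: "(\<Sum>i\<in>U - {i0}. x' i) \<le> (\<Sum>i\<in>U - {i0}. 1)" using Fc[OF x'(1)] by (intro sum_mono) auto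
    have e3: "(\<Sum>i\<in>U - {i0}. (1::real)) = real (card U) - 1" using cU fU i0 by (simp add: card_Diff_singleton of_nat_diff)
    have "x' i0 < 1" using Fc[OF x'(1)] i0 x'(2) by force
    then have "(\<Sum>i\<in>U. x' i) < real (card U)" using e1 e2 e3 by linarith
    then have k2: "k < card V + card U" using Fc[OF x'(1)] True by auto
    show ?thesis unfolding valid_def using UV k1 k2 True by auto
  next
    case False
    have "Top \<notin> T0" using False unfolding t_def by auto
    moreover have "Top \<in> CS n" unfolding CS_def by auto
    ultimately obtain x where x: "x \<in> F" "cv n k Top x \<noteq> 0" unfolding T0_def tight_def by auto
    have "(\<Sum>i<n. x i) < real k" using x Fc[OF x(1)] Fsum[OF x(1)] unfolding cv_def by auto
    then have k1: "card V < k" using Fsum[OF x(1)] sU0[OF x(1)] by auto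
    have "real k - 1 < (\<Sum>i<n. y i)" using yH unfolding H_char cv_def by auto
    then have "real k - 1 < real (card V) + real (card U)" using Fsum[OF yF] sUd[OF yF] by auto
    then have k2: "k \<le> card V + card U" by linarith
    show ?thesis unfolding valid_def using UV k1 k2 False by auto
  qed
  have "has_aff_dim F (dimv U t)" using dim_valid[OF valid] FG2 by simp
  then have "dimv U t = j" using aff_dim_unique dim by blast
  then show ?thesis using valid FG2 by blast
qed

definition Par :: "nat \<Rightarrow> nat \<Rightarrow> nat \<Rightarrow> (nat set \<times> nat set \<times> bool) set" where
  "Par n k j = {(U, V, t). valid n k U V t \<and> dimv U t = j}"

definition phi :: "nat \<Rightarrow> nat \<Rightarrow> nat set \<times> nat set \<times> bool \<Rightarrow> (nat \<Rightarrow> real) set" where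
  "phi n k p = (case p of (U, V, t) \<Rightarrow> G n k (mkT ({..<n}-U-V) V t) \<inter> H n k)"

lemma faces_eq:
  assumes "1 \<le> j"
  shows "{F \<inter> H n k | F. fface_of F (P n k) \<and> has_aff_dim F j \<and> F \<inter> H n k \<noteq> {}} = phi n k ` Par n k j"
proof
  show "{F \<inter> H n k | F. fface_of F (P n k) \<and> has_aff_dim F j \<and> F \<inter> H n k \<noteq> {}} \<subseteq> phi n k ` Par n k j"
  proof
    fix S assume "S \<in> {F \<inter> H n k | F. fface_of F (P n k) \<and> has_aff_dim F j \<and> F \<inter> H n k \<noteq> {}}"
    then obtain F where F: "S = F \<inter> H n k" "fface_of F (P n k)" "has_aff_dim F j" "F \<inter> H n k \<noteq> {}" by blast
    obtain U V t where "valid n k U V t" "dimv U t = j" "F = G n k (mkT ({..<n}-U-V) V t)"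
      using classify[OF F(2,3) assms F(4)] by blast
    then show "S \<in> phi n k ` Par n k j" using F(1) unfolding Par_def phi_def by (intro image_eqI[of _ _ "(U, V, t)"]) auto
  qed
  show "phi n k ` Par n k j \<subseteq> {F \<inter> H n k | F. fface_of F (P n k) \<and> has_aff_dim F j \<and> F \<inter> H n k \<noteq> {}}"
  proof
    fix S assume "S \<in> phi n k ` Par n k j"
    then obtain U V t where p: "valid n k U V t" "dimv U t = j" "S = G n k (mkT ({..<n}-U-V) V t) \<inter> H n k"
      unfolding Par_def phi_def by auto
    have "has_aff_dim (G n k (mkT ({..<n}-U-V) V t)) j" using dim_valid[OF p(1)] p(2) by simp
    moreover have "G n k (mkT ({..<n}-U-V) V t) \<inter> H n k \<noteq> {}" using xz_P[OF p(1)] by auto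
    ultimately show "S \<in> {F \<inter> H n k | F. fface_of F (P n k) \<and> has_aff_dim F j \<and> F \<inter> H n k \<noteq> {}}"
      using p(3) G_face by blast
  qed
qed

lemma phi_inj: "inj_on (phi n k) (Par n k j)"
proof (rule inj_onI)
  fix p q assume p: "p \<in> Par n k j" and q: "q \<in> Par n k j" and e: "phi n k p = phi n k q"
  obtain U V t where pp: "p = (U, V, t)" "valid n k U V t" using p unfolding Par_def by auto
  obtain U' V' t' where qq: "q = (U', V', t')" "valid n k U' V' t'" using q unfolding Par_def by auto
  have tp: "tight n k (phi n k p) = mkT ({..<n}-U-V) V t"
    unfolding pp(1) phi_def using xz_P[OF pp(2)] by (intro tight_valid[OF pp(2)]) auto
  have tq: "tight n k (phi n k q) = mkT ({..<n}-U'-V') V' t'"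
    unfolding qq(1) phi_def using xz_P[OF qq(2)] by (intro tight_valid[OF qq(2)]) auto
  have T: "mkT ({..<n}-U-V) V t = mkT ({..<n}-U'-V') V' t'" using tp tq e by simp
  have "V = V'"
  proof -
    from T have "\<forall>i. Hi i \<in> mkT ({..<n}-U-V) V t \<longleftrightarrow> Hi i \<in> mkT ({..<n}-U'-V') V' t'" by simp
    then have "\<And>i. i \<in> V \<longleftrightarrow> i \<in> V'" by simp
    then show ?thesis by auto
  qed
  moreover have "t = t'"
  proof -
    from T have "Top \<in> mkT ({..<n}-U-V) V t \<longleftrightarrow> Top \<in> mkT ({..<n}-U'-V') V' t'" by simp
    then show ?thesis by simp
  qed
  moreover have "{..<n}-U-V = {..<n}-U'-V'"
  proof -
    from T have "\<forall>i. Lo i \<in> mkT ({..<n}-U-V) V t \<longleftrightarrow> Lo i \<in> mkT ({..<n}-U'-V') V' t'" by simp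
    then have "\<And>i. i \<in> {..<n}-U-V \<longleftrightarrow> i \<in> {..<n}-U'-V'" by (simp only: mkT_simps)
    then show ?thesis by auto
  qed
  moreover have "U \<subseteq> {..<n}" "U \<inter> V = {}" "U' \<subseteq> {..<n}" "U' \<inter> V' = {}"
    using pp(2) qq(2) unfolding valid_def by auto
  ultimately have "U = U'" by blast
  then show "p = q" using pp qq \<open>V = V'\<close> \<open>t = t'\<close> by simp
qed

lemma f_half_open_card:
  assumes "1 \<le> j"
  shows "f_half_open n k j = card (Par n k j)"
  unfolding f_half_open_def faces_eq[OF assms] using card_image[OF phi_inj] by simp

definition QQ :: "nat \<Rightarrow> nat \<Rightarrow> nat \<Rightarrow> nat \<Rightarrow> (nat set \<times> nat set) set" where
  "QQ n j D k = {(U, V). U \<subseteq> {..<n} \<and> card U = D \<and> V \<subseteq> {..<n} - U \<and> card V < k \<and> k \<le> card V + j}"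

definition AA :: "nat \<Rightarrow> nat \<Rightarrow> (nat set \<times> nat set) set" where
  "AA n D = (SIGMA U:{U. U \<subseteq> {..<n} \<and> card U = D}. Pow ({..<n} - U))"

lemma AA_finite: "finite (AA n D)"
  unfolding AA_def by (rule finite_SigmaI) auto

lemma AA_card: "card (AA n D) = (n choose D) * 2 ^ (n - D)"
proof -
  have "card (AA n D) = (\<Sum>U\<in>{U. U \<subseteq> {..<n} \<and> card U = D}. card (Pow ({..<n} - U)))"
    unfolding AA_def by (rule card_SigmaI) auto
  also have "\<dots> = (\<Sum>U\<in>{U. U \<subseteq> {..<n} \<and> card U = D}. 2 ^ (n - D))"
  proof (rule sum.cong)
    fix U assume "U \<in> {U. U \<subseteq> {..<n} \<and> card U = D}"
    then have "card ({..<n} - U) = n - D" by (auto simp: card_Diff_subset finite_subset)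
    then show "card (Pow ({..<n} - U)) = 2 ^ (n - D)" by (simp add: card_Pow)
  qed simp
  also have "\<dots> = card {U. U \<subseteq> {..<n} \<and> card U = D} * 2 ^ (n - D)" by simp
  also have "card {U. U \<subseteq> {..<n} \<and> card U = D} = n choose D"
    using n_subsets[of "{..<n}" D] by simp
  finally show ?thesis .
qed

lemma QQ_filter: "QQ n j D k = {p \<in> AA n D. card (snd p) < k \<and> k \<le> card (snd p) + j}"
  unfolding QQ_def AA_def by auto

lemma count_k:
  assumes "o' + j \<le> n"
  shows "(\<Sum>k\<in>{1..n}. (if o' < k \<and> k \<le> o' + j then 1 else 0::nat)) = j"
proof -
  have "(\<Sum>k\<in>{1..n}. (if o' < k \<and> k \<le> o' + j then 1 else 0::nat)) = card {k \<in> {1..n}. o' < k \<and> k \<le> o' + j}"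
    by (simp add: sum.inter_filter[symmetric])
  also have "{k \<in> {1..n}. o' < k \<and> k \<le> o' + j} = {Suc o'..o' + j}" using assms by auto
  finally show ?thesis by simp
qed

lemma QQ_sum:
  assumes "j \<le> D"
  shows "(\<Sum>k\<in>{1..n}. card (QQ n j D k)) = j * ((n choose D) * 2 ^ (n - D))"
proof -
  have "(\<Sum>k\<in>{1..n}. card (QQ n j D k))
      = (\<Sum>k\<in>{1..n}. \<Sum>p\<in>AA n D. (if card (snd p) < k \<and> k \<le> card (snd p) + j then 1 else 0))"
    unfolding QQ_filter using AA_finite by (simp add: sum.inter_filter[symmetric])
  also have "\<dots> = (\<Sum>p\<in>AA n D. \<Sum>k\<in>{1..n}. (if card (snd p) < k \<and> k \<le> card (snd p) + j then 1 else 0))"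
    by (rule sum.swap)
  also have "\<dots> = (\<Sum>p\<in>AA n D. j)"
  proof (rule sum.cong)
    fix p assume "p \<in> AA n D"
    then obtain U V where p: "p = (U, V)" "U \<subseteq> {..<n}" "card U = D" "V \<subseteq> {..<n} - U"
      unfolding AA_def by auto
    have "card V \<le> card ({..<n} - U)" using p by (intro card_mono) auto
    also have "card ({..<n} - U) = n - D" using p by (auto simp: card_Diff_subset finite_subset)
    finally have cV: "card V \<le> n - D" .
    have "card U \<le> card {..<n}" using p by (intro card_mono) auto
    then have "D \<le> n" using p by simp
    then have "card V + j \<le> n" using cV assms by linarith
    then show "(\<Sum>k\<in>{1..n}. (if card (snd p) < k \<and> k \<le> card (snd p) + j then 1 else 0)) = j"
      using count_k p by simp
  qed simp
  also have "\<dots> = j * card (AA n D)" by simp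
  finally show ?thesis using AA_card by simp
qed

lemma Par_split:
  assumes "1 \<le> j"
  shows "card (Par n k j) = card (QQ n j (Suc j) k) + card (QQ n j j k)"
proof -
  let ?f = "\<lambda>(U, V). (U, V, True)" and ?g = "\<lambda>(U, V). (U, V, False)"
  have eq: "Par n k j = ?f ` QQ n j (Suc j) k \<union> ?g ` QQ n j j k"
  proof
    show "Par n k j \<subseteq> ?f ` QQ n j (Suc j) k \<union> ?g ` QQ n j j k"
    proof
      fix x assume "x \<in> Par n k j"
      then obtain U V t where x: "x = (U, V, t)" "valid n k U V t" "dimv U t = j" unfolding Par_def by auto
      show "x \<in> ?f ` QQ n j (Suc j) k \<union> ?g ` QQ n j j k"
      proof (cases t)
        case True
        then have "card U = Suc j" using x assms unfolding dimv_def by auto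
        then have "(U, V) \<in> QQ n j (Suc j) k" using x True unfolding valid_def QQ_def by auto
        then show ?thesis using x True by (intro UnI1 image_eqI[of _ _ "(U, V)"]) auto
      next
        case False
        then have "card U = j" using x unfolding dimv_def by auto
        then have "(U, V) \<in> QQ n j j k" using x False unfolding valid_def QQ_def by auto
        then show ?thesis using x False by (intro UnI2 image_eqI[of _ _ "(U, V)"]) auto
      qed
    qed
    show "?f ` QQ n j (Suc j) k \<union> ?g ` QQ n j j k \<subseteq> Par n k j"
      unfolding Par_def QQ_def valid_def dimv_def by auto
  qed
  have fin: "finite (QQ n j D k)" for D
    using AA_finite[of n D] unfolding QQ_filter by auto
  have "card (?f ` QQ n j (Suc j) k \<union> ?g ` QQ n j j k) = card (?f ` QQ n j (Suc j) k) + card (?g ` QQ n j j k)"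
    by (rule card_Un_disjoint) (use fin in auto)
  also have "card (?f ` QQ n j (Suc j) k) = card (QQ n j (Suc j) k)"
    by (rule card_image) (auto simp: inj_on_def)
  also have "card (?g ` QQ n j j k) = card (QQ n j j k)"
    by (rule card_image) (auto simp: inj_on_def)
  finally show ?thesis using eq by simp
qed

lemma total_count:
  assumes "1 \<le> j"
  shows "(\<Sum>k=1..n. f_half_open n k j) = j * ((n choose Suc j) * 2 ^ (n - Suc j)) + j * ((n choose j) * 2 ^ (n - j))"
proof -
  have "(\<Sum>k=1..n. f_half_open n k j) = (\<Sum>k=1..n. card (QQ n j (Suc j) k) + card (QQ n j j k))"
    using f_half_open_card[OF assms] Par_split[OF assms] by simp
  also have "\<dots> = (\<Sum>k=1..n. card (QQ n j (Suc j) k)) + (\<Sum>k=1..n. card (QQ n j j k))"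
    by (rule sum.distrib)
  finally show ?thesis using QQ_sum[of j "Suc j" n] QQ_sum[of j j n] by simp
qed



definition BB :: "nat \<Rightarrow> real fps" where
  "BB m = Abs_fps (\<lambda>n. real (n choose m) * 2 ^ (n - m))"

lemma BB0: "BB 0 * (1 - 2 * fps_X) = 1"
proof -
  have "BB 0 = 1 + fps_const 2 * (fps_X * BB 0)"
  proof (rule fps_ext)
    fix n show "fps_nth (BB 0) n = fps_nth (1 + fps_const 2 * (fps_X * BB 0)) n"
      by (cases n) (simp_all add: BB_def)
  qed
  then have "BB 0 - fps_const 2 * (fps_X * BB 0) = 1" by (metis add_diff_cancel)
  moreover have "BB 0 * (1 - 2 * fps_X) = BB 0 - fps_const 2 * (fps_X * BB 0)"
    by (simp add: algebra_simps numeral_fps_const)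
  ultimately show ?thesis by simp
qed

lemma BBstep: "BB (Suc m) * (1 - 2 * fps_X) = fps_X * BB m"
proof -
  have "BB (Suc m) = fps_X * BB m + fps_const 2 * (fps_X * BB (Suc m))"
  proof (rule fps_ext)
    fix n show "fps_nth (BB (Suc m)) n = fps_nth (fps_X * BB m + fps_const 2 * (fps_X * BB (Suc m))) n"
    proof (cases n)
      case 0 then show ?thesis by (simp add: BB_def)
    next
      case (Suc n')
      have "real (n' choose Suc m) * 2 ^ (n' - m) = 2 * (real (n' choose Suc m) * 2 ^ (n' - Suc m))"
      proof (cases "Suc m \<le> n'")
        case True
        then have "n' - m = Suc (n' - Suc m)" by simp
        then show ?thesis by simp
      next
        case False
        then show ?thesis by (simp add: binomial_eq_0)
      qed
      then show ?thesis using Suc by (simp add: BB_def algebra_simps)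
    qed
  qed
  then have "BB (Suc m) - fps_const 2 * (fps_X * BB (Suc m)) = fps_X * BB m" by (metis add_diff_cancel)
  moreover have "BB (Suc m) * (1 - 2 * fps_X) = BB (Suc m) - fps_const 2 * (fps_X * BB (Suc m))"
    by (simp add: algebra_simps numeral_fps_const)
  ultimately show ?thesis by simp
qed

lemma BBpow: "BB m * (1 - 2 * fps_X) ^ Suc m = fps_X ^ m"
proof (induction m)
  case 0 then show ?case using BB0 by simp
next
  case (Suc m)
  have "BB (Suc m) * (1 - 2 * fps_X) ^ Suc (Suc m) = (BB (Suc m) * (1 - 2 * fps_X)) * (1 - 2 * fps_X) ^ Suc m"
    by (simp only: power_Suc mult_ac)
  also have "\<dots> = fps_X * (BB m * (1 - 2 * fps_X) ^ Suc m)" by (simp only: BBstep mult.assoc)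
  also have "\<dots> = fps_X ^ Suc m" using Suc by simp
  finally show ?case .
qed

lemma real_identity:
  assumes "1 \<le> j" "j \<le> n"
  shows "real (j * ((n choose Suc j) * 2 ^ (n - Suc j)) + j * ((n choose j) * 2 ^ (n - j)))
     = real j * (2::real) powi (int n - int j - 1) * (real n + real j + 2) / (real n + 1)
                * real ((n + 1) choose (j + 1))"
proof (cases "j = n")
  case True
  have p: "(2::real) powi (int n - int j - 1) = 1/2" using True by (simp add: power_int_def)
  have "real n * (1/2) * (real n + real n + 2) / (real n + 1) = real n"
    by (simp add: field_simps)
  then show ?thesis using True p by simp
next
  case False
  define m where "m = n - Suc j"
  have nm: "n - j = Suc m" using False assms unfolding m_def by simp
  have p: "(2::real) powi (int n - int j - 1) = 2 ^ m"
  proof -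
    have "int n - int j - 1 = int m" using False assms unfolding m_def by simp
    then show ?thesis by (simp add: power_int_def)
  qed
  define a where "a = real (n choose j)"
  define b where "b = real (n choose Suc j)"
  define c where "c = real (Suc n choose Suc j)"
  have cab: "c = a + b" unfolding a_def b_def c_def by simp
  have rel: "(real n + 1) * a = c * (real j + 1)"
  proof -
    have "real (Suc n * (n choose j)) = real ((Suc n choose Suc j) * Suc j)"
      by (simp only: Suc_times_binomial_eq)
    then show ?thesis unfolding a_def c_def by (simp add: algebra_simps)
  qed
  have key: "(b + 2 * a) * (real n + 1) = (real n + real j + 2) * c"
  proof -
    have "(b + 2 * a) * (real n + 1) = (c + a) * (real n + 1)" using cab by simp
    also have "\<dots> = c * (real n + 1) + c * (real j + 1)" using rel by (simp add: algebra_simps)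
    finally show ?thesis by (simp add: algebra_simps)
  qed
  have lhs: "real (j * ((n choose Suc j) * 2 ^ (n - Suc j)) + j * ((n choose j) * 2 ^ (n - j)))
      = real j * 2 ^ m * (b + 2 * a)"
    unfolding a_def b_def m_def[symmetric] nm by (simp add: algebra_simps)
  have "real j * 2 ^ m * (b + 2 * a) = real j * 2 ^ m * (real n + real j + 2) / (real n + 1) * c"
  proof -
    have "real j * 2 ^ m * (b + 2 * a) = real j * 2 ^ m * ((b + 2 * a) * (real n + 1)) / (real n + 1)"
      by simp
    also have "\<dots> = real j * 2 ^ m * (real n + real j + 2) / (real n + 1) * c"
      unfolding key by simp
    finally show ?thesis .
  qed
  then show ?thesis using lhs p unfolding c_def by simp
qed

lemma fps_part:
  assumes j1: "1 \<le> j"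
  shows "Abs_fps (\<lambda>n. real (\<Sum>k=1..n. if j \<le> n then f_half_open n k j else 0))
              = fps_const (real j) * fps_X ^ j * (1 - fps_X) / (1 - 2 * fps_X) ^ (j + 2)"
proof -
  define A where "A = Abs_fps (\<lambda>n. real (\<Sum>k=1..n. if j \<le> n then f_half_open n k j else 0))"
  define Q :: "real fps" where "Q = (1 - 2 * fps_X) ^ (j + 2)"
  have AB: "A = fps_const (real j) * (BB (Suc j) + BB j)"
  proof (rule fps_ext)
    fix n
    show "fps_nth A n = fps_nth (fps_const (real j) * (BB (Suc j) + BB j)) n"
    proof (cases "j \<le> n")
      case True
      then have "fps_nth A n = real (\<Sum>k=1..n. f_half_open n k j)" unfolding A_def by simp
      also have "\<dots> = real (j * ((n choose Suc j) * 2 ^ (n - Suc j)) + j * ((n choose j) * 2 ^ (n - j)))"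
        using total_count[OF j1] by simp
      finally show ?thesis unfolding BB_def by (simp add: algebra_simps)
    next
      case False
      then have "fps_nth A n = 0" unfolding A_def by simp
      moreover have "n choose j = 0" "n choose Suc j = 0" using False by (simp_all add: binomial_eq_0)
      ultimately show ?thesis unfolding BB_def by (simp del: binomial_eq_0_iff)
    qed
  qed
  have "A * Q = fps_const (real j) * (BB (Suc j) * Q + BB j * Q)" unfolding AB by (simp add: algebra_simps)
  also have "BB (Suc j) * Q = fps_X ^ Suc j" unfolding Q_def using BBpow[of "Suc j"] by simp
  also have "BB j * Q = (BB j * (1 - 2 * fps_X) ^ Suc j) * (1 - 2 * fps_X)" unfolding Q_def
    by (simp add: mult_ac)
  also have "\<dots> = fps_X ^ j * (1 - 2 * fps_X)" using BBpow[of j] by simp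
  also have "fps_const (real j) * (fps_X ^ Suc j + fps_X ^ j * (1 - 2 * fps_X))
      = fps_const (real j) * fps_X ^ j * (1 - fps_X)" by (simp add: algebra_simps)
  finally have AQ: "A * Q = fps_const (real j) * fps_X ^ j * (1 - fps_X)" .
  have "(1 - 2 * fps_X :: real fps) \<noteq> 0"
  proof
    assume "(1 - 2 * fps_X :: real fps) = 0"
    then have "fps_nth (1 - 2 * fps_X :: real fps) 0 = 0" by simp
    then show False by simp
  qed
  then have Q0: "Q \<noteq> 0" unfolding Q_def by simp
  have "A = A * Q / Q" using Q0 by simp
  then show ?thesis unfolding AQ[symmetric] A_def Q_def by simp
qed

theorem theorem2p3:
  shows "(\<forall>n j::nat. 1 \<le> j \<and> j \<le> n \<longrightarrow>
            real (\<Sum>k=1..n. f_half_open n k j)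
              = real j * (2::real) powi (int n - int j - 1) * (real n + real j + 2) / (real n + 1)
                * real ((n + 1) choose (j + 1)))
       \<and> (\<forall>j::nat. 1 \<le> j \<longrightarrow>
            Abs_fps (\<lambda>n. real (\<Sum>k=1..n. if j \<le> n then f_half_open n k j else 0))
              = fps_const (real j) * fps_X ^ j * (1 - fps_X) / (1 - 2 * fps_X) ^ (j + 2))"
proof (intro conjI allI impI)
  fix n j :: nat assume "1 \<le> j \<and> j \<le> n"
  then show "real (\<Sum>k=1..n. f_half_open n k j)
              = real j * (2::real) powi (int n - int j - 1) * (real n + real j + 2) / (real n + 1)
                * real ((n + 1) choose (j + 1))"
    using total_count[of j n] real_identity[of j n] by simp
next
  fix j :: nat assume "1 \<le> j"
  then show "Abs_fps (\<lambda>n. real (\<Sum>k=1..n. if j \<le> n then f_half_open n k j else 0))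
              = fps_const (real j) * fps_X ^ j * (1 - fps_X) / (1 - 2 * fps_X) ^ (j + 2)"
    by (rule fps_part)
qed

end
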